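(* For the problem $1\mid t_j=1\mid\sum C_j$ with obligatory tests (all test times equal to $1$), no deterministic online algorithm has competitive ratio strictly smaller than $\sqrt2$: for every deterministic algorithm and every $\rho<\sqrt2$ there is an instance on which $\mathit{ALG}>\rho\cdot\mathit{OPT}$.
   Context: Scheduling with obligatory tests and uniform test times: $n$ jobs on a single machine, each with test time $t_j=1$ and an unknown processing time $p_j\ge0$ that is revealed to the algorithm only when the test of $j$ completes. The test of a job must be executed before its processing part (which can be executed any time afterwards); operations are non-preemptive, one at a time. $C_j$ is the completion time of the processing part of $j$; objective $\sum_j C_j$. $\mathit{OPT}$ is the optimal offline objective value (tests also obligatory), $\mathit{ALG}$ the algorithm's value. An online algorithm knows $n$ and the test times in advance. *)

theory Defs
  imports Complex_Main
begin

datatype operation = Test nat | Proc nat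

fun dur :: "(nat \<Rightarrow> real) \<Rightarrow> operation \<Rightarrow> real" where
  "dur p (Test j) = 1"
| "dur p (Proc j) = p j"

text \<open>A schedule is a list of (operation, idle time inserted before it); operations run
  one at a time, non-preemptively, in list order.\<close>
definition feasible :: "nat \<Rightarrow> (operation \<times> real) list \<Rightarrow> bool" where
  "feasible n s \<longleftrightarrow>
     distinct (map fst s) \<and>
     set (map fst s) = {Test j | j. j < n} \<union> {Proc j | j. j < n} \<and>
     (\<forall>k j. k < length s \<and> fst (s ! k) = Proc j \<longrightarrow> (\<exists>i<k. fst (s ! i) = Test j)) \<and>
     (\<forall>k < length s. 0 \<le> snd (s ! k))"

definition finish :: "(nat \<Rightarrow> real) \<Rightarrow> (operation \<times> real) list \<Rightarrow> nat \<Rightarrow> real" where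
  "finish p s k = (\<Sum>i\<le>k. snd (s ! i) + dur p (fst (s ! i)))"

fun is_proc :: "operation \<Rightarrow> bool" where
  "is_proc (Test j) = False"
| "is_proc (Proc j) = True"

definition cost :: "(nat \<Rightarrow> real) \<Rightarrow> (operation \<times> real) list \<Rightarrow> real" where
  "cost p s = (\<Sum>k\<in>{k. k < length s \<and> is_proc (fst (s ! k))}. finish p s k)"

definition OPT :: "nat \<Rightarrow> (nat \<Rightarrow> real) \<Rightarrow> real" where
  "OPT n p = Inf {cost p s | s. feasible n s}"

text \<open>Information revealed to the online algorithm when an operation completes:
  the processing time p j after the test of j; nothing (0) after a processing part.\<close>
fun reveal :: "(nat \<Rightarrow> real) \<Rightarrow> operation \<Rightarrow> real" where
  "reveal p (Test j) = p j"
| "reveal p (Proc j) = 0"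

definition observations :: "(nat \<Rightarrow> real) \<Rightarrow> (operation \<times> real) list \<Rightarrow> (operation \<times> real) list" where
  "observations p s = map (\<lambda>(a, d). (a, reveal p a)) s"

text \<open>A deterministic online algorithm A: given n (test times are all 1, hence known) and the
  history of operations executed so far together with the information revealed by them,
  it decides the next operation and the idle time before starting it.\<close>
type_synonym online_algorithm = "nat \<Rightarrow> (operation \<times> real) list \<Rightarrow> operation \<times> real"

fun run :: "online_algorithm \<Rightarrow> nat \<Rightarrow> (nat \<Rightarrow> real) \<Rightarrow> nat \<Rightarrow> (operation \<times> real) list" where
  "run A n p 0 = []"
| "run A n p (Suc k) = (let s = run A n p k in s @ [A n (observations p s)])"

definition online_alg :: "online_algorithm \<Rightarrow> bool" where
  "online_alg A \<longleftrightarrow> (\<forall>n p. (\<forall>j<n. 0 \<le> p j) \<longrightarrow> feasible n (run A n p (2 * n)))"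

definition ALG :: "online_algorithm \<Rightarrow> nat \<Rightarrow> (nat \<Rightarrow> real) \<Rightarrow> real" where
  "ALG A n p = cost p (run A n p (2 * n))"

end

theory Submission
  imports Defs
begin


lemma run_length[simp]: "length (run A n p M) = M"
  by (induction M) (auto simp: Let_def)

lemma run_take: "M \<le> N \<Longrightarrow> take M (run A n p N) = run A n p M"
proof (induction N)
  case 0 then show ?case by simp
next
  case (Suc N)
  show ?case
  proof (cases "M = Suc N")
    case True then show ?thesis by (metis run_length order_refl take_all)
  next
    case False
    then have "M \<le> N" using Suc by simp
    then show ?thesis using Suc by (simp add: Let_def)
  qed
qed

lemma run_nth: "i < M \<Longrightarrow> M \<le> N \<Longrightarrow> run A n p N ! i = run A n p M ! i"
  by (metis nth_take run_take)

lemma observations_cong: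
  assumes "\<And>i j. i < length s \<Longrightarrow> fst (s ! i) = Test j \<Longrightarrow> p j = p' j"
  shows "observations p s = observations p' s"
  unfolding observations_def
proof (rule nth_equalityI)
  fix i assume "i < length (map (\<lambda>(a, d). (a, reveal p a)) s)"
  then have i: "i < length s" by simp
  show "map (\<lambda>(a, d). (a, reveal p a)) s ! i = map (\<lambda>(a, d). (a, reveal p' a)) s ! i"
    using assms[OF i] i by (cases "s ! i"; cases "fst (s ! i)") auto
qed simp

lemma run_agree:
  "(\<forall>i<M. \<forall>j. fst (run A n p M ! i) = Test j \<longrightarrow> p j = p' j) \<Longrightarrow>
   run A n p (Suc M) = run A n p' (Suc M)"
proof (induction M)
  case 0 then show ?case by (simp add: observations_def)
next
  case (Suc M)
  have h: "\<forall>i<M. \<forall>j. fst (run A n p M ! i) = Test j \<longrightarrow> p j = p' j"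
  proof (intro allI impI)
    fix i j assume "i < M" "fst (run A n p M ! i) = Test j"
    then show "p j = p' j" using Suc.prems run_nth[of i M "Suc M" A n p] by (metis le_SucI order_refl less_SucI)
  qed
  have e: "run A n p (Suc M) = run A n p' (Suc M)" using Suc.IH[OF h] .
  have "observations p (run A n p (Suc M)) = observations p' (run A n p (Suc M))"
    by (rule observations_cong) (use Suc.prems in \<open>simp del: run.simps\<close>)
  moreover have "run A n p (Suc (Suc M)) = run A n p (Suc M) @ [A n (observations p (run A n p (Suc M)))]"
    by (simp only: run.simps Let_def)
  moreover have "run A n p' (Suc (Suc M)) = run A n p' (Suc M) @ [A n (observations p' (run A n p' (Suc M)))]"
    by (simp only: run.simps Let_def)
  ultimately show ?case using e by (simp del: run.simps)
qed



fun job :: "operation \<Rightarrow> nat" where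
  "job (Test j) = j" | "job (Proc j) = j"

definition tb :: "(operation \<times> real) list \<Rightarrow> nat \<Rightarrow> nat" where
  "tb s m = card {i. i < m \<and> \<not> is_proc (fst (s ! i))}"

definition pc :: "(operation \<times> real) list \<Rightarrow> nat \<Rightarrow> nat" where
  "pc s m = card {i. i < m \<and> is_proc (fst (s ! i))}"

lemma tb_Suc: "tb s (Suc m) = tb s m + (if is_proc (fst (s ! m)) then 0 else 1)"
proof -
  have "{i. i < Suc m \<and> \<not> is_proc (fst (s ! i))} =
        {i. i < m \<and> \<not> is_proc (fst (s ! i))} \<union> (if is_proc (fst (s ! m)) then {} else {m})"
    by (auto simp: less_Suc_eq)
  then show ?thesis unfolding tb_def by (auto simp: card_insert_if)
qed

lemma pc_Suc: "pc s (Suc m) = pc s m + (if is_proc (fst (s ! m)) then 1 else 0)"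
proof -
  have "{i. i < Suc m \<and> is_proc (fst (s ! i))} =
        {i. i < m \<and> is_proc (fst (s ! i))} \<union> (if is_proc (fst (s ! m)) then {m} else {})"
    by (auto simp: less_Suc_eq)
  then show ?thesis unfolding pc_def by (auto simp: card_insert_if)
qed

lemma tb_0[simp]: "tb s 0 = 0" and pc_0[simp]: "pc s 0 = 0"
  by (auto simp: tb_def pc_def)

lemma tb_pc: "tb s m + pc s m = m"
  by (induction m) (auto simp: tb_Suc pc_Suc)

lemma tb_mono: "m \<le> m' \<Longrightarrow> tb s m \<le> tb s m'"
  unfolding tb_def by (rule card_mono) auto

lemma pc_mono: "m \<le> m' \<Longrightarrow> pc s m \<le> pc s m'"
  unfolding pc_def by (rule card_mono) auto

lemma feasible_distinct: "feasible n s \<Longrightarrow> i < length s \<Longrightarrow> i' < length s \<Longrightarrow>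
   fst (s ! i) = fst (s ! i') \<Longrightarrow> i = i'"
  unfolding feasible_def using nth_eq_iff_index_eq[of "map fst s" i i'] by simp

lemma feasible_set: "feasible n s \<Longrightarrow> set (map fst s) = Test ` {..<n} \<union> Proc ` {..<n}"
  unfolding feasible_def by auto

lemma feasible_job: "feasible n s \<Longrightarrow> i < length s \<Longrightarrow> job (fst (s ! i)) < n"
proof -
  assume f: "feasible n s" and i: "i < length s"
  have "fst (s ! i) \<in> set (map fst s)" using i by auto
  then show ?thesis using feasible_set[OF f] by auto
qed

lemma feasible_test_before: "feasible n s \<Longrightarrow> m < length s \<Longrightarrow> fst (s ! m) = Proc j \<Longrightarrow>
   \<exists>i<m. fst (s ! i) = Test j"
  unfolding feasible_def by blast

lemma feasible_idle: "feasible n s \<Longrightarrow> k < length s \<Longrightarrow> 0 \<le> snd (s ! k)"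
  unfolding feasible_def by blast

lemma feasible_has: "feasible n s \<Longrightarrow> op \<in> Test ` {..<n} \<union> Proc ` {..<n} \<Longrightarrow>
  \<exists>i<length s. fst (s ! i) = op"
proof -
  assume f: "feasible n s" and o: "op \<in> Test ` {..<n} \<union> Proc ` {..<n}"
  then have "op \<in> set (map fst s)" using feasible_set[OF f] by simp
  then obtain i where "i < length (map fst s)" "map fst s ! i = op" by (auto simp: in_set_conv_nth)
  then show ?thesis by auto
qed

lemma card_procs: assumes f: "feasible n s" shows "card {i. i < length s \<and> is_proc (fst (s ! i))} = n"
proof -
  let ?I = "{i. i < length s \<and> is_proc (fst (s ! i))}"
  have inj: "inj_on (\<lambda>i. fst (s ! i)) ?I" by (rule inj_onI) (use feasible_distinct[OF f] in auto)
  have "(\<lambda>i. fst (s ! i)) ` ?I = Proc ` {..<n}"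
  proof
    show "(\<lambda>i. fst (s ! i)) ` ?I \<subseteq> Proc ` {..<n}"
    proof
      fix w assume "w \<in> (\<lambda>i. fst (s ! i)) ` ?I"
      then obtain i where i: "i < length s" "is_proc (fst (s ! i))" "w = fst (s ! i)" by auto
      have "fst (s ! i) \<in> set (map fst s)" using i by auto
      then have "fst (s ! i) \<in> Test ` {..<n} \<union> Proc ` {..<n}" using feasible_set[OF f] by simp
      then show "w \<in> Proc ` {..<n}" using i by (cases "fst (s ! i)") auto
    qed
  next
    show "Proc ` {..<n} \<subseteq> (\<lambda>i. fst (s ! i)) ` ?I"
    proof
      fix w assume "w \<in> Proc ` {..<n}"
      then obtain i where "i < length s" "fst (s ! i) = w" using feasible_has[OF f] by blast
      then show "w \<in> (\<lambda>i. fst (s ! i)) ` ?I" using \<open>w \<in> Proc ` {..<n}\<close> by force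
    qed
  qed
  then have "card ?I = card (Proc ` {..<n})" using card_image[OF inj] by simp
  also have "\<dots> = n" by (simp add: card_image inj_on_def)
  finally show ?thesis .
qed

lemma card_tests: assumes f: "feasible n s" shows "card {i. i < length s \<and> \<not> is_proc (fst (s ! i))} = n"
proof -
  let ?I = "{i. i < length s \<and> \<not> is_proc (fst (s ! i))}"
  have inj: "inj_on (\<lambda>i. fst (s ! i)) ?I" by (rule inj_onI) (use feasible_distinct[OF f] in auto)
  have "(\<lambda>i. fst (s ! i)) ` ?I = Test ` {..<n}"
  proof
    show "(\<lambda>i. fst (s ! i)) ` ?I \<subseteq> Test ` {..<n}"
    proof
      fix w assume "w \<in> (\<lambda>i. fst (s ! i)) ` ?I"
      then obtain i where i: "i < length s" "\<not> is_proc (fst (s ! i))" "w = fst (s ! i)" by auto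
      have "fst (s ! i) \<in> set (map fst s)" using i by auto
      then have "fst (s ! i) \<in> Test ` {..<n} \<union> Proc ` {..<n}" using feasible_set[OF f] by simp
      then show "w \<in> Test ` {..<n}" using i by (cases "fst (s ! i)") auto
    qed
  next
    show "Test ` {..<n} \<subseteq> (\<lambda>i. fst (s ! i)) ` ?I"
    proof
      fix w assume "w \<in> Test ` {..<n}"
      then obtain i where "i < length s" "fst (s ! i) = w" using feasible_has[OF f] by blast
      then show "w \<in> (\<lambda>i. fst (s ! i)) ` ?I" using \<open>w \<in> Test ` {..<n}\<close> by force
    qed
  qed
  then have "card ?I = card (Test ` {..<n})" using card_image[OF inj] by simp
  also have "\<dots> = n" by (simp add: card_image inj_on_def)
  finally show ?thesis .
qed

lemma feasible_length: assumes f: "feasible n s" shows "length s = 2 * n"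
proof -
  have "tb s (length s) + pc s (length s) = length s" by (rule tb_pc)
  moreover have "tb s (length s) = n" using card_tests[OF f] by (simp add: tb_def)
  moreover have "pc s (length s) = n" using card_procs[OF f] by (simp add: pc_def)
  ultimately show ?thesis by simp
qed

lemma exists_L: assumes f: "feasible n s" and k: "k < n"
  shows "\<exists>L < length s. \<not> is_proc (fst (s ! L)) \<and> tb s L = k"
proof -
  have tl: "tb s (length s) = n" using card_tests[OF f] by (simp add: tb_def)
  have "\<exists>m. m < length s \<and> k < tb s (Suc m)"
  proof -
    have "length s > 0" using tl k by (cases "length s") auto
    then show ?thesis using tl k by (intro exI[of _ "length s - 1"]) auto
  qed
  then obtain m where m: "m < length s" "k < tb s (Suc m)" "\<forall>m'<m. \<not> (k < tb s (Suc m'))"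
    using exists_least_iff[of "\<lambda>m. m < length s \<and> k < tb s (Suc m)"] by (metis less_trans)
  have "tb s m \<le> k"
  proof (cases m)
    case 0 then show ?thesis by simp
  next
    case (Suc m') then show ?thesis using m(3) by auto
  qed
  then show ?thesis using m(1,2) tb_Suc[of s m] by (intro exI[of _ m]) (auto split: if_splits)
qed



definition dsum :: "(nat \<Rightarrow> real) \<Rightarrow> (operation \<times> real) list \<Rightarrow> nat \<Rightarrow> real" where
  "dsum p s m = (\<Sum>i<m. dur p (fst (s ! i)))"

lemma dur_nonneg: "(\<forall>j. 0 \<le> p j) \<Longrightarrow> 0 \<le> dur p o'"
  by (cases o') auto

lemma cost_lb:
  assumes f: "feasible n s" and p: "\<forall>j. 0 \<le> p j"
  shows "(\<Sum>m\<in>{m. m < length s \<and> is_proc (fst (s ! m))}. dsum p s (Suc m)) \<le> cost p s"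
  unfolding cost_def
proof (rule sum_mono)
  fix m assume m: "m \<in> {m. m < length s \<and> is_proc (fst (s ! m))}"
  have "dsum p s (Suc m) = (\<Sum>i\<le>m. dur p (fst (s ! i)))"
    unfolding dsum_def using lessThan_Suc_atMost by simp
  also have "\<dots> \<le> (\<Sum>i\<le>m. snd (s ! i) + dur p (fst (s ! i)))"
    by (rule sum_mono) (use m feasible_idle[OF f] in auto)
  finally show "dsum p s (Suc m) \<le> finish p s m" unfolding finish_def .
qed

lemma window_bound:
  assumes f: "feasible n s" and L: "L < length s" and tL: "\<not> is_proc (fst (s ! L))"
    and tbL: "tb s L = k" and x: "1 \<le> x"
    and pdef: "\<And>j. p j = (if \<exists>i<L. fst (s ! i) = Test j then x else 0)"
    and m: "m < length s" "L < m"
    and rdef: "r = card {i. L < i \<and> i \<le> m \<and> is_proc (fst (s ! i))}"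
  shows "real r + (x - 1) * real (r - (n - k)) \<le> (\<Sum>i\<in>{L..m}. dur p (fst (s ! i)))"
proof -
  define X where "X = {j. \<exists>i<L. fst (s ! i) = Test j}"
  define jf where "jf = (\<lambda>i. job (fst (s ! i)))"
  define Ms where "Ms = {i. L < i \<and> i \<le> m \<and> is_proc (fst (s ! i))}"
  define Mx where "Mx = {i \<in> Ms. jf i \<in> X}"
  define M0 where "M0 = {i \<in> Ms. jf i \<notin> X}"
  define T0 where "T0 = {i. L \<le> i \<and> i \<le> m \<and> \<not> is_proc (fst (s ! i)) \<and> jf i \<notin> X}"
  have pnn: "\<forall>j. 0 \<le> p j" using pdef x by simp
  have finMs: "finite Ms" unfolding Ms_def by (rule finite_subset[of _ "{..m}"]) auto
  have finT0: "finite T0" unfolding T0_def by (rule finite_subset[of _ "{..m}"]) auto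
  have MsU: "Ms = Mx \<union> M0" "Mx \<inter> M0 = {}" unfolding Mx_def M0_def by auto
  have finMx: "finite Mx" "finite M0" using finMs MsU by auto
  have cardMs: "card Mx + card M0 = r"
  proof -
    have "card Ms = card Mx + card M0" using card_Un_disjoint[OF finMx MsU(2)] MsU(1) by simp
    then show ?thesis using rdef unfolding Ms_def by simp
  qed
  have procform: "\<And>i. is_proc (fst (s ! i)) \<Longrightarrow> fst (s ! i) = Proc (jf i)"
    unfolding jf_def by (case_tac "fst (s ! i)") auto
  have testform: "\<And>i. \<not> is_proc (fst (s ! i)) \<Longrightarrow> fst (s ! i) = Test (jf i)"
    unfolding jf_def by (case_tac "fst (s ! i)") auto
  have cardX: "card X = k"
  proof -
    let ?T = "{i. i < L \<and> \<not> is_proc (fst (s ! i))}"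
    have "X = jf ` ?T"
    proof
      show "X \<subseteq> jf ` ?T"
      proof
        fix j assume "j \<in> X"
        then obtain i where "i < L" "fst (s ! i) = Test j" unfolding X_def by blast
        then have "jf i = j" "i \<in> ?T" unfolding jf_def by auto
        then show "j \<in> jf ` ?T" by (metis image_eqI)
      qed
    next
      show "jf ` ?T \<subseteq> X"
      proof
        fix j assume "j \<in> jf ` ?T"
        then obtain i where "i \<in> ?T" "j = jf i" by blast
        then have "i < L" "fst (s ! i) = Test j" using testform by auto
        then show "j \<in> X" unfolding X_def by blast
      qed
    qed
    moreover have "inj_on jf ?T"
    proof (rule inj_onI)
      fix i i' assume "i \<in> ?T" "i' \<in> ?T" "jf i = jf i'"
      then have "fst (s ! i) = fst (s ! i')" using testform[of i] testform[of i'] \<open>i \<in> ?T\<close> \<open>i' \<in> ?T\<close> by simp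
      then show "i = i'" using feasible_distinct[OF f] \<open>i \<in> ?T\<close> \<open>i' \<in> ?T\<close> L by auto
    qed
    ultimately have "card X = card ?T" using card_image by simp
    then show ?thesis using tbL unfolding tb_def by simp
  qed
  have Xsub: "X \<subseteq> {..<n}"
  proof
    fix j assume "j \<in> X"
    then obtain i where "i < L" "fst (s ! i) = Test j" unfolding X_def by blast
    then show "j \<in> {..<n}" using feasible_job[OF f, of i] L by auto
  qed
  have injM0: "inj_on jf M0"
  proof (rule inj_onI)
    fix i i' assume a: "i \<in> M0" "i' \<in> M0" "jf i = jf i'"
    then have "fst (s ! i) = fst (s ! i')" using procform[of i] procform[of i'] a(1,2) unfolding M0_def Ms_def by simp
    then show "i = i'" using feasible_distinct[OF f] a m unfolding M0_def Ms_def by auto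
  qed
  have sub1: "jf ` M0 \<subseteq> jf ` T0"
  proof
    fix j assume "j \<in> jf ` M0"
    then obtain i where i: "i \<in> M0" "j = jf i" by blast
    then have ip: "fst (s ! i) = Proc j" "i < length s" "i \<le> m" "L < i" "j \<notin> X"
      using procform m unfolding M0_def Ms_def by auto
    obtain i0 where i0: "i0 < i" "fst (s ! i0) = Test j" using feasible_test_before[OF f ip(2) ip(1)] by blast
    have "L \<le> i0" using i0 ip(5) unfolding X_def by (metis (mono_tags, lifting) mem_Collect_eq not_le)
    then have "i0 \<in> T0" using i0 ip unfolding T0_def jf_def by auto
    moreover have "jf i0 = j" using i0 unfolding jf_def by simp
    ultimately show "j \<in> jf ` T0" by (metis image_eqI)
  qed
  have c1: "card M0 \<le> card T0"
  proof -
    have "card M0 = card (jf ` M0)" using card_image[OF injM0] by simp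
    also have "\<dots> \<le> card (jf ` T0)" by (rule card_mono) (use finT0 sub1 in auto)
    also have "\<dots> \<le> card T0" by (rule card_image_le[OF finT0])
    finally show ?thesis .
  qed
  have sub2: "jf ` M0 \<subseteq> {..<n} - X"
  proof
    fix j assume "j \<in> jf ` M0"
    then obtain i where i: "i \<in> M0" "j = jf i" by blast
    then show "j \<in> {..<n} - X" using feasible_job[OF f, of i] m unfolding M0_def Ms_def jf_def by auto
  qed
  have c2: "card M0 \<le> n - k"
  proof -
    have "card M0 = card (jf ` M0)" using card_image[OF injM0] by simp
    also have "\<dots> \<le> card ({..<n} - X)" by (rule card_mono) (use sub2 in auto)
    also have "\<dots> = n - k" using cardX Xsub by (simp add: card_Diff_subset finite_subset)
    finally show ?thesis .
  qed
  have durx: "dur p (fst (s ! i)) = x" if "i \<in> Mx" for i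
  proof -
    have "is_proc (fst (s ! i))" "jf i \<in> X" using that by (auto simp: Mx_def Ms_def)
    then have "fst (s ! i) = Proc (jf i)" "p (jf i) = x" using procform pdef unfolding X_def by auto
    then show ?thesis by simp
  qed
  have dur1: "dur p (fst (s ! i)) = 1" if "i \<in> T0" for i
  proof -
    have "\<not> is_proc (fst (s ! i))" using that by (auto simp: T0_def)
    then have "fst (s ! i) = Test (jf i)" using testform by auto
    then show ?thesis by simp
  qed
  have disj: "Mx \<inter> T0 = {}" unfolding Mx_def Ms_def T0_def by auto
  have "real (card Mx) * x + real (card T0) = (\<Sum>i\<in>Mx. dur p (fst (s ! i))) + (\<Sum>i\<in>T0. dur p (fst (s ! i)))"
    using durx dur1 by simp
  also have "\<dots> = (\<Sum>i\<in>Mx \<union> T0. dur p (fst (s ! i)))"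
    by (rule sum.union_disjoint[symmetric]) (use finMx finT0 disj in auto)
  also have "\<dots> \<le> (\<Sum>i\<in>{L..m}. dur p (fst (s ! i)))"
  proof (rule sum_mono2)
    show "Mx \<union> T0 \<subseteq> {L..m}" unfolding Mx_def Ms_def T0_def by auto
  qed (auto simp: dur_nonneg[OF pnn])
  finally have S: "real (card Mx) * x + real (card T0) \<le> (\<Sum>i\<in>{L..m}. dur p (fst (s ! i)))" .
  have "real r + (x - 1) * real (r - (n - k)) \<le> real (card Mx) * x + real (card M0)"
  proof (cases "r \<le> n - k")
    case True
    then have z: "r - (n - k) = 0" by simp
    have "real (card Mx) * 1 \<le> real (card Mx) * x" by (rule mult_left_mono) (use x in auto)
    moreover have "real r = real (card Mx) + real (card M0)" using cardMs by (metis of_nat_add)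
    ultimately show ?thesis using z by simp
  next
    case False
    then have "r - (n - k) \<le> card Mx" using cardMs c2 by linarith
    then have "real (r - (n - k)) \<le> real (card Mx)" by simp
    then have "(x - 1) * real (r - (n - k)) \<le> (x - 1) * real (card Mx)" using x by (intro mult_left_mono) auto
    moreover have "real r = real (card Mx) + real (card M0)" using cardMs by (metis of_nat_add)
    moreover have "(x - 1) * real (card Mx) = real (card Mx) * x - real (card Mx)" by (simp add: algebra_simps)
    ultimately show ?thesis by linarith
  qed
  then show ?thesis using S c1 by linarith
qed



lemma dsum_split: "L \<le> m \<Longrightarrow> dsum p s (Suc m) = dsum p s L + (\<Sum>i\<in>{L..m}. dur p (fst (s ! i)))"
proof -
  assume "L \<le> m"
  then have "{..<Suc m} = {..<L} \<union> {L..m}" by auto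
  moreover have "{..<L} \<inter> {L..m} = {}" by auto
  ultimately show ?thesis unfolding dsum_def by (simp add: sum.union_disjoint)
qed

lemma dsum_Suc: "dsum p s (Suc m) = dsum p s m + dur p (fst (s ! m))"
  unfolding dsum_def by simp

lemma tail_bound:
  assumes f: "feasible n s" and L: "L < length s" and tL: "\<not> is_proc (fst (s ! L))"
    and tbL: "tb s L = k" and x: "1 \<le> x"
    and pdef: "\<And>j. p j = (if \<exists>i<L. fst (s ! i) = Test j then x else 0)"
  shows "M \<le> length s \<Longrightarrow>
    (\<Sum>r\<in>{1..card {m. L < m \<and> m < M \<and> is_proc (fst (s ! m))}}. dsum p s L + real r + (x - 1) * real (r - (n - k)))
    \<le> (\<Sum>m\<in>{m. L < m \<and> m < M \<and> is_proc (fst (s ! m))}. dsum p s (Suc m))"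
proof (induction M)
  case 0 then show ?case by simp
next
  case (Suc M)
  let ?A = "\<lambda>M. {m. L < m \<and> m < M \<and> is_proc (fst (s ! m))}"
  let ?g = "\<lambda>r. dsum p s L + real r + (x - 1) * real (r - (n - k))"
  have IH: "(\<Sum>r\<in>{1..card (?A M)}. ?g r) \<le> (\<Sum>m\<in>?A M. dsum p s (Suc m))" using Suc by simp
  have finA: "finite (?A M)" by (rule finite_subset[of _ "{..<M}"]) auto
  show ?case
  proof (cases "L < M \<and> is_proc (fst (s ! M))")
    case True
    have AS: "?A (Suc M) = insert M (?A M)" using True by (auto simp: less_Suc_eq)
    have nin: "M \<notin> ?A M" by simp
    have cS: "card (?A (Suc M)) = Suc (card (?A M))" using AS nin finA by simp
    have w: "real (Suc (card (?A M))) + (x - 1) * real (Suc (card (?A M)) - (n - k))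
       \<le> (\<Sum>i\<in>{L..M}. dur p (fst (s ! i)))"
    proof (rule window_bound[OF f L tL tbL x pdef])
      show "M < length s" using Suc by simp
      show "L < M" using True by simp
      have "{i. L < i \<and> i \<le> M \<and> is_proc (fst (s ! i))} = ?A (Suc M)" by (auto simp: less_Suc_eq_le)
      then show "Suc (card (?A M)) = card {i. L < i \<and> i \<le> M \<and> is_proc (fst (s ! i))}" using cS by simp
    qed
    have d: "dsum p s (Suc M) = dsum p s L + (\<Sum>i\<in>{L..M}. dur p (fst (s ! i)))"
      using True by (intro dsum_split) simp
    have "(\<Sum>r\<in>{1..card (?A (Suc M))}. ?g r) = (\<Sum>r\<in>{1..card (?A M)}. ?g r) + ?g (Suc (card (?A M)))"
      using cS by simp
    also have "\<dots> \<le> (\<Sum>m\<in>?A M. dsum p s (Suc m)) + dsum p s (Suc M)"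
      using IH w d by linarith
    also have "\<dots> = (\<Sum>m\<in>?A (Suc M). dsum p s (Suc m))"
      using AS nin finA by simp
    finally show ?thesis .
  next
    case False
    then have "?A (Suc M) = ?A M" by (auto simp: less_Suc_eq)
    then show ?thesis using IH by simp
  qed
qed

lemma prefix_dsum:
  assumes f: "feasible n s" and L: "L < length s" and x: "1 \<le> x"
    and pdef: "\<And>j. p j = (if \<exists>i<L. fst (s ! i) = Test j then x else 0)"
  shows "M \<le> L \<Longrightarrow> dsum p s M = real (tb s M) + x * real (pc s M)"
proof (induction M)
  case 0 then show ?case by (simp add: dsum_def)
next
  case (Suc M)
  have IH: "dsum p s M = real (tb s M) + x * real (pc s M)" using Suc by simp
  have hML: "M < L" using Suc by simp
  show ?case
  proof (cases "is_proc (fst (s ! M))")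
    case True
    then obtain j where j: "fst (s ! M) = Proc j" by (cases "fst (s ! M)") auto
    obtain i0 where "i0 < M" "fst (s ! i0) = Test j" using feasible_test_before[OF f _ j] hML L by auto
    then have "p j = x" using pdef hML by auto
    then show ?thesis using IH j True by (simp add: dsum_Suc tb_Suc pc_Suc algebra_simps)
  next
    case False
    then obtain j where j: "fst (s ! M) = Test j" by (cases "fst (s ! M)") auto
    then show ?thesis using IH False by (simp add: dsum_Suc tb_Suc pc_Suc algebra_simps)
  qed
qed

lemma tri_sum: "(\<Sum>m\<in>{m. m < M \<and> is_proc (fst (s ! m))}. real (pc s m) + 1) = real (pc s M) * (real (pc s M) + 1) / 2"
proof (induction M)
  case 0 then show ?case by simp
next
  case (Suc M)
  let ?A = "\<lambda>M. {m. m < M \<and> is_proc (fst (s ! m))}"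
  have finA: "finite (?A M)" by (rule finite_subset[of _ "{..<M}"]) auto
  show ?case
  proof (cases "is_proc (fst (s ! M))")
    case True
    then have "?A (Suc M) = insert M (?A M)" by (auto simp: less_Suc_eq)
    then show ?thesis using Suc finA True by (simp add: pc_Suc algebra_simps add_divide_distrib)
  next
    case False
    then have "?A (Suc M) = ?A M" by (auto simp: less_Suc_eq)
    then show ?thesis using Suc False by (simp add: pc_Suc)
  qed
qed

definition Qs :: "(operation \<times> real) list \<Rightarrow> nat \<Rightarrow> nat \<Rightarrow> nat" where
  "Qs s L j = card {m. m < L \<and> is_proc (fst (s ! m)) \<and> tb s m \<le> j}"

lemma tb_sum:
  assumes tbL: "tb s L = k"
  shows "(\<Sum>m\<in>{m. m < L \<and> is_proc (fst (s ! m))}. real (tb s m)) = (\<Sum>j<k. real (pc s L) - real (Qs s L j))"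
proof -
  let ?P = "{m. m < L \<and> is_proc (fst (s ! m))}"
  have finP: "finite ?P" by (rule finite_subset[of _ "{..<L}"]) auto
  have le: "tb s m \<le> k" if "m \<in> ?P" for m using tb_mono[of m L s] that tbL by auto
  have "(\<Sum>m\<in>?P. real (tb s m)) = (\<Sum>m\<in>?P. \<Sum>j<k. if j < tb s m then 1 else 0)"
  proof (rule sum.cong[OF refl])
    fix m assume "m \<in> ?P"
    then have "tb s m \<le> k" using le by blast
    then have e: "{j\<in>{..<k}. j < tb s m} = {..<tb s m}" by auto
    have "(\<Sum>j<k. if j < tb s m then 1 else (0::real)) = (\<Sum>j\<in>{j\<in>{..<k}. j < tb s m}. 1)"
      by (rule sum.inter_filter[symmetric]) simp
    also have "\<dots> = real (card {..<tb s m})" unfolding e by simp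
    finally have "(\<Sum>j<k. if j < tb s m then 1 else (0::real)) = real (card {..<tb s m})" .
    then show "real (tb s m) = (\<Sum>j<k. if j < tb s m then 1 else 0)" by simp
  qed
  also have "\<dots> = (\<Sum>j<k. \<Sum>m\<in>?P. if j < tb s m then 1 else 0)" by (rule sum.swap)
  also have "\<dots> = (\<Sum>j<k. real (pc s L) - real (Qs s L j))"
  proof (rule sum.cong[OF refl])
    fix j
    have "(\<Sum>m\<in>?P. if j < tb s m then 1 else (0::real)) = real (card {m\<in>?P. j < tb s m})"
      using sum.inter_filter[OF finP, of "\<lambda>_. (1::real)" "\<lambda>m. j < tb s m"] by simp
    also have "card {m\<in>?P. j < tb s m} = card ?P - card {m. m < L \<and> is_proc (fst (s ! m)) \<and> tb s m \<le> j}"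
    proof -
      have "{m\<in>?P. j < tb s m} = ?P - {m. m < L \<and> is_proc (fst (s ! m)) \<and> tb s m \<le> j}" by auto
      moreover have "{m. m < L \<and> is_proc (fst (s ! m)) \<and> tb s m \<le> j} \<subseteq> ?P" by auto
      ultimately show ?thesis using finP by (simp add: card_Diff_subset finite_subset)
    qed
    also have "card ?P = pc s L" by (simp add: pc_def)
    finally have "(\<Sum>m\<in>?P. if j < tb s m then 1 else (0::real)) = real (pc s L - Qs s L j)"
      unfolding Qs_def .
    moreover have "Qs s L j \<le> pc s L" unfolding Qs_def pc_def by (rule card_mono) (use finP in auto)
    ultimately show "(\<Sum>m\<in>?P. if j < tb s m then 1 else (0::real)) = real (pc s L) - real (Qs s L j)"
      by simp
  qed
  finally show ?thesis .
qed



lemma alg_lb: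
  assumes f: "feasible n s" and L: "L < length s" and tL: "\<not> is_proc (fst (s ! L))"
    and tbL: "tb s L = k" and x: "1 \<le> x"
    and pdef: "\<And>j. p j = (if \<exists>i<L. fst (s ! i) = Test j then x else 0)"
  shows "(\<Sum>j<k. real (pc s L) - real (Qs s L j)) + x * (real (pc s L) * (real (pc s L) + 1) / 2)
     + (\<Sum>r\<in>{1..n - pc s L}. real k + x * real (pc s L) + real r + (x - 1) * real (r - (n - k)))
     \<le> cost p s"
proof -
  let ?P = "pc s L"
  define Pall where "Pall = {m. m < length s \<and> is_proc (fst (s ! m))}"
  define Ppre where "Ppre = {m. m < L \<and> is_proc (fst (s ! m))}"
  define Ppost where "Ppost = {m. L < m \<and> m < length s \<and> is_proc (fst (s ! m))}"
  have pnn: "\<forall>j. 0 \<le> p j" using pdef x by simp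
  have U: "Pall = Ppre \<union> Ppost" unfolding Pall_def Ppre_def Ppost_def using L tL
    by (auto, metis linorder_neqE_nat)
  have D: "Ppre \<inter> Ppost = {}" unfolding Ppre_def Ppost_def by auto
  have finpre: "finite Ppre" unfolding Ppre_def by (rule finite_subset[of _ "{..<L}"]) auto
  have finpost: "finite Ppost" unfolding Ppost_def by (rule finite_subset[of _ "{..<length s}"]) auto
  have cpre: "card Ppre = ?P" unfolding Ppre_def pc_def by simp
  have "card Pall = n" unfolding Pall_def by (rule card_procs[OF f])
  then have cpost: "card Ppost = n - ?P" using U D finpre finpost cpre card_Un_disjoint by (metis add_diff_cancel_left')
  have pre: "(\<Sum>m\<in>Ppre. dsum p s (Suc m)) = (\<Sum>m\<in>Ppre. real (tb s m) + x * (real (pc s m) + 1))"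
  proof (rule sum.cong[OF refl])
    fix m assume m: "m \<in> Ppre"
    then have "Suc m \<le> L" "is_proc (fst (s ! m))" unfolding Ppre_def by auto
    then show "dsum p s (Suc m) = real (tb s m) + x * (real (pc s m) + 1)"
      using prefix_dsum[OF f L x pdef, of "Suc m"] by (simp add: tb_Suc pc_Suc algebra_simps)
  qed
  also have "\<dots> = (\<Sum>m\<in>Ppre. real (tb s m)) + x * (\<Sum>m\<in>Ppre. real (pc s m) + 1)"
    by (subst sum.distrib) (simp only: sum_distrib_left)
  also have "\<dots> = (\<Sum>j<k. real ?P - real (Qs s L j)) + x * (real ?P * (real ?P + 1) / 2)"
    unfolding Ppre_def using tb_sum[OF tbL] tri_sum[of s L] by simp
  finally have pre': "(\<Sum>m\<in>Ppre. dsum p s (Suc m)) = (\<Sum>j<k. real ?P - real (Qs s L j)) + x * (real ?P * (real ?P + 1) / 2)" .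
  have B: "dsum p s L = real k + x * real ?P" using prefix_dsum[OF f L x pdef, of L] tbL by simp
  have post: "(\<Sum>r\<in>{1..n - ?P}. real k + x * real ?P + real r + (x - 1) * real (r - (n - k))) \<le> (\<Sum>m\<in>Ppost. dsum p s (Suc m))"
    using tail_bound[OF f L tL tbL x pdef, of "length s"] cpost B unfolding Ppost_def by simp
  have "(\<Sum>m\<in>Pall. dsum p s (Suc m)) = (\<Sum>m\<in>Ppre. dsum p s (Suc m)) + (\<Sum>m\<in>Ppost. dsum p s (Suc m))"
    unfolding U by (rule sum.union_disjoint[OF finpre finpost D])
  moreover have "(\<Sum>m\<in>Pall. dsum p s (Suc m)) \<le> cost p s" unfolding Pall_def by (rule cost_lb[OF f pnn])
  ultimately show ?thesis using pre' post by linarith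
qed



definition sched :: "nat list \<Rightarrow> (operation \<times> real) list" where
  "sched js = map (\<lambda>m. (if even m then Test (js ! (m div 2)) else Proc (js ! (m div 2)), 0)) [0..<2 * length js]"

lemma sched_length[simp]: "length (sched js) = 2 * length js"
  by (simp add: sched_def)

lemma sched_nth: "m < 2 * length js \<Longrightarrow> sched js ! m = (if even m then Test (js ! (m div 2)) else Proc (js ! (m div 2)), 0)"
  by (simp add: sched_def)

lemma sched_feasible:
  assumes d: "distinct js" and st: "set js = {..<n}"
  shows "feasible n (sched js)"
  unfolding feasible_def
proof (intro conjI allI impI)
  have ln: "length js = n" using d st distinct_card by fastforce
  show "distinct (map fst (sched js))"
  proof (rule distinct_conv_nth[THEN iffD2], intro allI impI)
    fix i j assume ij: "i < length (map fst (sched js))" "j < length (map fst (sched js))" "i \<noteq> j"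
    then have i: "i < 2 * length js" and j: "j < 2 * length js" by auto
    have di: "i div 2 < length js" "j div 2 < length js" using i j by auto
    show "map fst (sched js) ! i \<noteq> map fst (sched js) ! j"
    proof
      assume "map fst (sched js) ! i = map fst (sched js) ! j"
      then have e: "fst (sched js ! i) = fst (sched js ! j)" using i j by simp
      then have "even i = even j" using i j by (auto simp: sched_nth split: if_splits)
      moreover then have "js ! (i div 2) = js ! (j div 2)" using e i j by (auto simp: sched_nth split: if_splits)
      then have "i div 2 = j div 2" using d di nth_eq_iff_index_eq by blast
      ultimately have "i = j" by (metis div_mult_mod_eq even_iff_mod_2_eq_zero odd_iff_mod_2_eq_one)
      then show False using ij by simp
    qed
  qed
  show "set (map fst (sched js)) = {Test j |j. j < n} \<union> {Proc j |j. j < n}"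
  proof
    show "set (map fst (sched js)) \<subseteq> {Test j |j. j < n} \<union> {Proc j |j. j < n}"
    proof
      fix o' assume "o' \<in> set (map fst (sched js))"
      then obtain m where m: "m < 2 * length js" "o' = fst (sched js ! m)" by (auto simp: in_set_conv_nth)
      then have "m div 2 < length js" by auto
      then have "js ! (m div 2) < n" using st nth_mem by fastforce
      then show "o' \<in> {Test j |j. j < n} \<union> {Proc j |j. j < n}" using m by (auto simp: sched_nth)
    qed
  next
    show "{Test j |j. j < n} \<union> {Proc j |j. j < n} \<subseteq> set (map fst (sched js))"
    proof
      fix o' assume "o' \<in> {Test j |j. j < n} \<union> {Proc j |j. j < n}"
      then obtain j where j: "j < n" "o' = Test j \<or> o' = Proc j" by blast
      then obtain l where l: "l < length js" "js ! l = j" using st by (metis in_set_conv_nth lessThan_iff)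
      have a: "2 * l < 2 * length js" "Suc (2 * l) < 2 * length js" using l by auto
      have "fst (sched js ! (2 * l)) = Test j" "fst (sched js ! Suc (2 * l)) = Proc j"
        using a l by (auto simp: sched_nth)
      then show "o' \<in> set (map fst (sched js))" using j a
        by (metis (no_types, lifting) length_map nth_map nth_mem sched_length)
    qed
  qed
  fix k j assume a: "k < length (sched js) \<and> fst (sched js ! k) = Proc j"
  then have k: "k < 2 * length js" by simp
  then have "odd k" "js ! (k div 2) = j" using a by (auto simp: sched_nth split: if_splits)
  moreover have "k - 1 < k" "even (k - 1)" "(k - 1) div 2 = k div 2" using \<open>odd k\<close>
    by (auto elim: oddE)
  ultimately show "\<exists>i<k. fst (sched js ! i) = Test j" using k
    by (intro exI[of _ "k - 1"]) (auto simp: sched_nth)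
next
  fix k assume "k < length (sched js)"
  then show "0 \<le> snd (sched js ! k)" by (simp add: sched_nth)
qed

lemma sum_pairs: "(\<Sum>i\<le>Suc (2 * l). (g::nat\<Rightarrow>real) i) = (\<Sum>l'\<le>l. g (2 * l') + g (Suc (2 * l')))"
  by (induction l) (auto simp: atMost_Suc add_ac)

lemma sched_cost:
  "cost p (sched js) = (\<Sum>l<length js. \<Sum>l'\<le>l. 1 + p (js ! l'))"
proof -
  let ?N = "length js"
  have S: "{k. k < length (sched js) \<and> is_proc (fst (sched js ! k))} = (\<lambda>l. Suc (2 * l)) ` {..<?N}"
  proof
    show "{k. k < length (sched js) \<and> is_proc (fst (sched js ! k))} \<subseteq> (\<lambda>l. Suc (2 * l)) ` {..<?N}"
    proof
      fix k assume "k \<in> {k. k < length (sched js) \<and> is_proc (fst (sched js ! k))}"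
      then have k: "k < 2 * ?N" "odd k" by (auto simp: sched_nth split: if_splits)
      then obtain l where "k = Suc (2 * l)" by (metis oddE add.commute plus_1_eq_Suc)
      then show "k \<in> (\<lambda>l. Suc (2 * l)) ` {..<?N}" using k by auto
    qed
  next
    show "(\<lambda>l. Suc (2 * l)) ` {..<?N} \<subseteq> {k. k < length (sched js) \<and> is_proc (fst (sched js ! k))}"
      by (auto simp: sched_nth)
  qed
  have inj: "inj_on (\<lambda>l. Suc (2 * l)) {..<?N}" by (auto simp: inj_on_def)
  have F: "finish p (sched js) (Suc (2 * l)) = (\<Sum>l'\<le>l. 1 + p (js ! l'))" if "l < ?N" for l
  proof -
    have "finish p (sched js) (Suc (2 * l)) = (\<Sum>l'\<le>l. (snd (sched js ! (2 * l')) + dur p (fst (sched js ! (2 * l'))))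
        + (snd (sched js ! Suc (2 * l')) + dur p (fst (sched js ! Suc (2 * l')))))"
      unfolding finish_def by (rule sum_pairs)
    also have "\<dots> = (\<Sum>l'\<le>l. 1 + p (js ! l'))"
    proof (rule sum.cong[OF refl])
      fix l' assume "l' \<in> {..l}"
      then have "2 * l' < 2 * ?N" "Suc (2 * l') < 2 * ?N" using that by auto
      then show "(snd (sched js ! (2 * l')) + dur p (fst (sched js ! (2 * l'))))
        + (snd (sched js ! Suc (2 * l')) + dur p (fst (sched js ! Suc (2 * l')))) = 1 + p (js ! l')"
        by (simp add: sched_nth)
    qed
    finally show ?thesis .
  qed
  show ?thesis unfolding cost_def S sum.reindex[OF inj] using F by simp
qed

lemma cost_nonneg: "feasible n s \<Longrightarrow> \<forall>j. 0 \<le> p j \<Longrightarrow> 0 \<le> cost p s"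
proof -
  assume f: "feasible n s" and p: "\<forall>j. 0 \<le> p j"
  show ?thesis unfolding cost_def finish_def
  proof (intro sum_nonneg)
    fix k i assume "k \<in> {k. k < length s \<and> is_proc (fst (s ! k))}" "i \<in> {..k}"
    then have "i < length s" by auto
    then show "0 \<le> snd (s ! i) + dur p (fst (s ! i))"
      using feasible_idle[OF f] dur_nonneg[OF p] by (simp add: add_nonneg_nonneg)
  qed
qed

lemma OPT_le: "feasible n s \<Longrightarrow> \<forall>j. 0 \<le> p j \<Longrightarrow> OPT n p \<le> cost p s"
  unfolding OPT_def
  by (rule cInf_lower) (auto intro: bdd_belowI[of _ 0] cost_nonneg)

lemma OPT_nonneg: "feasible n s \<Longrightarrow> \<forall>j. 0 \<le> p j \<Longrightarrow> 0 \<le> OPT n p"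
  unfolding OPT_def
  by (rule cInf_greatest) (auto intro: cost_nonneg)



lemma sumform: "(\<Sum>r\<in>{1..N}. (A::real) + real r + y * real (r - c)) =
   real N * A + real N * (real N + 1) / 2 + y * (real (N - c) * (real (N - c) + 1) / 2)"
proof (induction N)
  case 0 then show ?case by simp
next
  case (Suc N)
  have "(\<Sum>r\<in>{1..Suc N}. A + real r + y * real (r - c)) = (\<Sum>r\<in>{1..N}. A + real r + y * real (r - c)) + (A + real (Suc N) + y * real (Suc N - c))"
    by simp
  also have "\<dots> = real (Suc N) * A + real (Suc N) * (real (Suc N) + 1) / 2 + y * (real (Suc N - c) * (real (Suc N - c) + 1) / 2)"
  proof (cases "N < c")
    case True
    then have "Suc N - c = 0" "N - c = 0" by auto
    then show ?thesis using Suc by (simp add: field_simps)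
  next
    case False
    then have "Suc N - c = Suc (N - c)" by auto
    then show ?thesis using Suc by (simp add: field_simps)
  qed
  finally show ?case .
qed

lemma comb:
  fixes a b c d :: nat
  assumes "a \<le> b" "b \<le> c" "c \<le> d" "d \<le> 8"
  shows "(99/70) * (228/5) \<le> (real c - 0) + (real c - real a) + (real c - real b) + (8/5) * (real c * (real c + 1) / 2)
      + (real (8 - c) * (3 + (8/5) * real c) + real (8 - c) * (real (8 - c) + 1) / 2 + (8/5 - 1) * (real (8 - c - (8 - 3)) * (real (8 - c - (8 - 3)) + 1) / 2))
   \<or> (99/70) * 52 \<le> (real d - 0) + (real d - real a) + (real d - real b) + (real d - real c) + (8/5) * (real d * (real d + 1) / 2)
      + (real (8 - d) * (4 + (8/5) * real d) + real (8 - d) * (real (8 - d) + 1) / 2 + (8/5 - 1) * (real (8 - d - (8 - 4)) * (real (8 - d - (8 - 4)) + 1) / 2))"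
proof -
  have c8: "c \<le> 8" "d \<le> 8" using assms by auto
  have ab: "real a \<le> real b" "real b \<le> real c" using assms by auto
  have cs: "c = 0 \<or> c = 1 \<or> c = 2 \<or> c = 3 \<or> c = 4 \<or> c = 5 \<or> c = 6 \<or> c = 7 \<or> c = 8" using c8 by arith
  have ds: "d = 0 \<or> d = 1 \<or> d = 2 \<or> d = 3 \<or> d = 4 \<or> d = 5 \<or> d = 6 \<or> d = 7 \<or> d = 8" using c8 by arith
  have cd: "c \<le> d" using assms by simp
  show ?thesis using cs ds cd ab
    apply (elim disjE)
    apply (simp_all)
    done
qed



lemma card_X:
  assumes f: "feasible n s" and L: "L \<le> length s" and tbL: "tb s L = k"
  shows "card {j. \<exists>i<L. fst (s ! i) = Test j} = k" "{j. \<exists>i<L. fst (s ! i) = Test j} \<subseteq> {..<n}"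
proof -
  define X where "X = {j. \<exists>i<L. fst (s ! i) = Test j}"
  define jf where "jf = (\<lambda>i. job (fst (s ! i)))"
  let ?T = "{i. i < L \<and> \<not> is_proc (fst (s ! i))}"
  have testform: "\<And>i. \<not> is_proc (fst (s ! i)) \<Longrightarrow> fst (s ! i) = Test (jf i)"
    unfolding jf_def by (case_tac "fst (s ! i)") auto
  have "X = jf ` ?T"
  proof
    show "X \<subseteq> jf ` ?T"
    proof
      fix j assume "j \<in> X"
      then obtain i where "i < L" "fst (s ! i) = Test j" unfolding X_def by blast
      then have "jf i = j" "i \<in> ?T" unfolding jf_def by auto
      then show "j \<in> jf ` ?T" by (metis image_eqI)
    qed
  next
    show "jf ` ?T \<subseteq> X"
    proof
      fix j assume "j \<in> jf ` ?T"
      then obtain i where "i \<in> ?T" "j = jf i" by blast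
      then have "i < L" "fst (s ! i) = Test j" using testform by auto
      then show "j \<in> X" unfolding X_def by blast
    qed
  qed
  moreover have "inj_on jf ?T"
  proof (rule inj_onI)
    fix i i' assume "i \<in> ?T" "i' \<in> ?T" "jf i = jf i'"
    then have "fst (s ! i) = fst (s ! i')" using testform[of i] testform[of i'] by simp
    then show "i = i'" using feasible_distinct[OF f] \<open>i \<in> ?T\<close> \<open>i' \<in> ?T\<close> L by auto
  qed
  ultimately have "card X = card ?T" using card_image by simp
  then show "card {j. \<exists>i<L. fst (s ! i) = Test j} = k" using tbL unfolding tb_def X_def by simp
  show "{j. \<exists>i<L. fst (s ! i) = Test j} \<subseteq> {..<n}"
  proof
    fix j assume "j \<in> {j. \<exists>i<L. fst (s ! i) = Test j}"
    then obtain i where "i < L" "fst (s ! i) = Test j" by blast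
    then show "j \<in> {..<n}" using feasible_job[OF f, of i] L by auto
  qed
qed

lemma prefix_same:
  assumes "\<forall>i<L. s ! i = s' ! i"
  shows "tb s L = tb s' L" "pc s L = pc s' L" "Qs s L j = Qs s' L j"
proof -
  show "tb s L = tb s' L" unfolding tb_def using assms by (metis (lifting))
  show "pc s L = pc s' L" unfolding pc_def using assms by (metis (lifting))
  have "\<forall>m<L. tb s m = tb s' m"
  proof (intro allI impI)
    fix m assume "m < L"
    then have "{i. i < m \<and> \<not> is_proc (fst (s ! i))} = {i. i < m \<and> \<not> is_proc (fst (s' ! i))}" using assms by auto
    then show "tb s m = tb s' m" unfolding tb_def by simp
  qed
  then have "{m. m < L \<and> is_proc (fst (s ! m)) \<and> tb s m \<le> j} = {m. m < L \<and> is_proc (fst (s' ! m)) \<and> tb s' m \<le> j}"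
    using assms by auto
  then show "Qs s L j = Qs s' L j" unfolding Qs_def by simp
qed

definition LBf :: "real \<Rightarrow> nat \<Rightarrow> nat \<Rightarrow> nat \<Rightarrow> (nat \<Rightarrow> nat) \<Rightarrow> real" where
  "LBf x n k P Q = (\<Sum>j<k. real P - real (Q j)) + x * (real P * (real P + 1) / 2)
     + (\<Sum>r\<in>{1..n - P}. real k + x * real P + real r + (x - 1) * real (r - (n - k)))"

lemma instance_bound:
  assumes oa: "online_alg A" and x: "1 \<le> x" and k: "k < n"
    and S: "S = run A n (\<lambda>_. x) (2 * n)"
    and L: "L < length S" "\<not> is_proc (fst (S ! L))" "tb S L = k"
    and pdef: "p = (\<lambda>j. if \<exists>i<L. fst (S ! i) = Test j then x else 0)"
  shows "LBf x n k (pc S L) (Qs S L) \<le> ALG A n p"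
    and "OPT n p \<le> (\<Sum>l<n. \<Sum>l'\<le>l. 1 + (if l' < n - k then 0 else x))"
    and "\<forall>j<n. 0 \<le> p j"
proof -
  have pnn: "\<forall>j. 0 \<le> p j" using pdef x by simp
  then show "\<forall>j<n. 0 \<le> p j" by simp
  have fS: "feasible n S" using oa x unfolding online_alg_def S by simp
  have lenS: "length S = 2 * n" using S by simp
  define Sk where "Sk = run A n p (2 * n)"
  have fSk: "feasible n Sk" using oa pnn unfolding online_alg_def Sk_def by simp
  have lenSk: "length Sk = 2 * n" unfolding Sk_def by simp
  have agree: "run A n (\<lambda>_. x) (Suc L) = run A n p (Suc L)"
  proof (rule run_agree, intro allI impI)
    fix i j assume "i < L" "fst (run A n (\<lambda>_. x) L ! i) = Test j"
    moreover have "run A n (\<lambda>_. x) L ! i = S ! i" using \<open>i < L\<close> L(1) lenS S run_nth[of i L "2 * n"] by simp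
    ultimately show "x = p j" using pdef by auto
  qed
  have eq: "\<forall>i\<le>L. Sk ! i = S ! i"
  proof (intro allI impI)
    fix i assume "i \<le> L"
    then have "Sk ! i = run A n p (Suc L) ! i" unfolding Sk_def using run_nth[of i "Suc L" "2 * n" A n p] L(1) lenS by simp
    also have "\<dots> = run A n (\<lambda>_. x) (Suc L) ! i" using agree by simp
    also have "\<dots> = S ! i" using S run_nth[of i "Suc L" "2 * n" A n "\<lambda>_. x"] L(1) lenS \<open>i \<le> L\<close> by simp
    finally show "Sk ! i = S ! i" .
  qed
  then have eq': "\<forall>i<L. Sk ! i = S ! i" by simp
  have pdefk: "\<And>j. p j = (if \<exists>i<L. fst (Sk ! i) = Test j then x else 0)"
    using pdef eq' by auto
  have Lk: "L < length Sk" "\<not> is_proc (fst (Sk ! L))" "tb Sk L = k"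
    using L lenS lenSk eq prefix_same(1)[OF eq'] by auto
  have "LBf x n k (pc Sk L) (Qs Sk L) \<le> cost p Sk"
    unfolding LBf_def by (rule alg_lb[OF fSk Lk x pdefk])
  moreover have "pc Sk L = pc S L" "Qs Sk L = Qs S L" using prefix_same[OF eq'] by auto
  ultimately show "LBf x n k (pc S L) (Qs S L) \<le> ALG A n p" unfolding ALG_def Sk_def by simp
  define X where "X = {j. \<exists>i<L. fst (S ! i) = Test j}"
  have cX: "card X = k" and Xs: "X \<subseteq> {..<n}" using card_X[OF fS _ L(3)] L(1) unfolding X_def by auto
  have finX: "finite X" using Xs finite_subset by blast
  define js where "js = sorted_list_of_set ({..<n} - X) @ sorted_list_of_set X"
  have l1: "length (sorted_list_of_set ({..<n} - X)) = n - k" using cX Xs finX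
    by (simp add: card_Diff_subset)
  have l2: "length (sorted_list_of_set X) = k" using cX by simp
  have ljs: "length js = n" unfolding js_def using l1 l2 k by simp
  have djs: "distinct js" unfolding js_def using finX by auto
  have sjs: "set js = {..<n}" unfolding js_def using finX Xs by auto
  have pjs: "p (js ! l) = (if l < n - k then 0 else x)" if "l < n" for l
  proof (cases "l < n - k")
    case True
    then have "js ! l \<in> {..<n} - X" unfolding js_def using l1 finX
      by (metis DiffI finite_Diff finite_lessThan nth_append nth_mem set_sorted_list_of_set Diff_iff)
    then show ?thesis using True pdef unfolding X_def by auto
  next
    case False
    then have "js ! l = sorted_list_of_set X ! (l - (n - k))" unfolding js_def using l1 by (simp add: nth_append)
    moreover have "l - (n - k) < k" using False that k by auto
    ultimately have "js ! l \<in> X" using l2 finX by (metis nth_mem set_sorted_list_of_set)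
    then show ?thesis using False pdef unfolding X_def by auto
  qed
  have "OPT n p \<le> cost p (sched js)" by (rule OPT_le[OF sched_feasible[OF djs sjs] pnn])
  also have "\<dots> = (\<Sum>l<n. \<Sum>l'\<le>l. 1 + p (js ! l'))" using sched_cost ljs by simp
  also have "\<dots> = (\<Sum>l<n. \<Sum>l'\<le>l. 1 + (if l' < n - k then 0 else x))"
    by (intro sum.cong refl) (auto simp: pjs)
  finally show "OPT n p \<le> (\<Sum>l<n. \<Sum>l'\<le>l. 1 + (if l' < n - k then 0 else x))" .
qed



definition GQ :: "(operation \<times> real) list \<Rightarrow> nat \<Rightarrow> nat" where
  "GQ S j = card {m. m < length S \<and> is_proc (fst (S ! m)) \<and> tb S m \<le> j}"

lemma Qs_GQ:
  assumes L: "L < length S" "\<not> is_proc (fst (S ! L))" "tb S L = k" and j: "j \<le> k"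
  shows "Qs S L j = GQ S j"
proof -
  have "{m. m < L \<and> is_proc (fst (S ! m)) \<and> tb S m \<le> j} = {m. m < length S \<and> is_proc (fst (S ! m)) \<and> tb S m \<le> j}"
  proof (intro Collect_cong iffI)
    fix m assume "m < L \<and> is_proc (fst (S ! m)) \<and> tb S m \<le> j"
    then show "m < length S \<and> is_proc (fst (S ! m)) \<and> tb S m \<le> j" using L by auto
  next
    fix m assume m: "m < length S \<and> is_proc (fst (S ! m)) \<and> tb S m \<le> j"
    have "m < L"
    proof (rule ccontr)
      assume "\<not> m < L"
      then have "Suc L \<le> m" using m L(2) by (metis le_eq_less_or_eq not_less_eq_eq)
      then have "tb S (Suc L) \<le> tb S m" by (rule tb_mono)
      moreover have "tb S (Suc L) = Suc k" using L by (simp add: tb_Suc)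
      ultimately show False using m j by simp
    qed
    then show "m < L \<and> is_proc (fst (S ! m)) \<and> tb S m \<le> j" using m by simp
  qed
  then show ?thesis unfolding Qs_def GQ_def by simp
qed

lemma pc_GQ:
  assumes L: "L < length S" "\<not> is_proc (fst (S ! L))" "tb S L = k"
  shows "pc S L = GQ S k"
proof -
  have "pc S L = Qs S L k"
  proof -
    have "{m. m < L \<and> is_proc (fst (S ! m))} = {m. m < L \<and> is_proc (fst (S ! m)) \<and> tb S m \<le> k}"
      using tb_mono[of _ L S] L(3) by (auto simp: less_imp_le)
    then show ?thesis unfolding pc_def Qs_def by simp
  qed
  then show ?thesis using Qs_GQ[OF L] by simp
qed

lemma GQ0: assumes f: "feasible n S" shows "GQ S 0 = 0"
proof -
  have "{m. m < length S \<and> is_proc (fst (S ! m)) \<and> tb S m \<le> 0} = {}"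
  proof (rule ccontr)
    assume "{m. m < length S \<and> is_proc (fst (S ! m)) \<and> tb S m \<le> 0} \<noteq> {}"
    then obtain m where m: "m < length S" "is_proc (fst (S ! m))" "tb S m = 0" by auto
    then obtain j where j: "fst (S ! m) = Proc j" by (cases "fst (S ! m)") auto
    obtain i where i: "i < m" "fst (S ! i) = Test j" using feasible_test_before[OF f m(1) j] by blast
    have "i \<in> {i. i < m \<and> \<not> is_proc (fst (S ! i))}" using i by simp
    then have "card {i. i < m \<and> \<not> is_proc (fst (S ! i))} \<noteq> 0" by (auto simp: card_eq_0_iff)
    then show False using m(3) unfolding tb_def by simp
  qed
  then show ?thesis unfolding GQ_def by simp
qed

lemma GQ_mono: "j \<le> j' \<Longrightarrow> GQ S j \<le> GQ S j'"
  unfolding GQ_def by (rule card_mono) auto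

lemma GQ_le: assumes f: "feasible n S" shows "GQ S j \<le> n"
proof -
  have "GQ S j \<le> card {m. m < length S \<and> is_proc (fst (S ! m))}"
    unfolding GQ_def by (rule card_mono) auto
  then show ?thesis using card_procs[OF f] by simp
qed

lemma final_step:
  fixes Op U Alg R \<rho> :: real
  assumes "0 \<le> Op" "Op \<le> U" "R * U \<le> Alg" "\<rho> < R" "0 < U" "0 < R"
  shows "\<rho> * Op < Alg"
proof (cases "\<rho> \<le> 0")
  case True
  then have "\<rho> * Op \<le> 0" using assms(1) by (simp add: mult_nonpos_nonneg)
  moreover have "0 < R * U" using assms by simp
  ultimately show ?thesis using assms(3) by linarith
next
  case False
  then have "\<rho> * Op \<le> \<rho> * U" using assms by (intro mult_left_mono) auto
  moreover have "\<rho> * U < R * U" using assms by simp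
  ultimately show ?thesis using assms(3) by linarith
qed

lemma U3: "(\<Sum>l<(8::nat). \<Sum>l'\<le>l. 1 + (if l' < 8 - 3 then 0 else 8/5::real)) = 228/5"
  by (simp add: eval_nat_numeral lessThan_Suc atMost_Suc)

lemma U4: "(\<Sum>l<(8::nat). \<Sum>l'\<le>l. 1 + (if l' < 8 - 4 then 0 else 8/5::real)) = 52"
  by (simp add: eval_nat_numeral lessThan_Suc atMost_Suc)

lemma sqrt2_le: "sqrt 2 \<le> (99/70::real)"
proof -
  have "sqrt 2 \<le> sqrt ((99/70)^2)" by (rule real_sqrt_le_mono) (simp add: power2_eq_square)
  also have "\<dots> = 99/70" by simp
  finally show ?thesis .
qed

declare run.simps[simp del]

theorem theorem3:
  fixes A :: online_algorithm and \<rho> :: real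
  assumes "online_alg A" and "\<rho> < sqrt 2"
  shows "\<exists>n p. (\<forall>j<n. 0 \<le> p j) \<and> ALG A n p > \<rho> * OPT n p"
proof -
  define x :: real where "x = 8/5"
  define S where "S = run A 8 (\<lambda>_. x) (2 * 8)"
  have x1: "1 \<le> x" unfolding x_def by simp
  have oa: "\<And>n p. (\<forall>j<n. 0 \<le> p j) \<Longrightarrow> feasible n (run A n p (2 * n))"
    using assms(1) unfolding online_alg_def by blast
  have fS: "feasible 8 S" unfolding S_def by (rule oa) (use x1 in simp)
  have k3: "(3::nat) < 8" and k4: "(4::nat) < 8" by simp_all
  obtain L3 where L3: "L3 < length S" "\<not> is_proc (fst (S ! L3))" "tb S L3 = 3" using exists_L[OF fS, of 3] by auto
  obtain L4 where L4: "L4 < length S" "\<not> is_proc (fst (S ! L4))" "tb S L4 = 4" using exists_L[OF fS, of 4] by auto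
  define p3 where "p3 = (\<lambda>j. if \<exists>i<L3. fst (S ! i) = Test j then x else 0)"
  define p4 where "p4 = (\<lambda>j. if \<exists>i<L4. fst (S ! i) = Test j then x else 0)"
  note I3 = instance_bound[OF assms(1) x1 _ S_def L3 p3_def]
  note I4 = instance_bound[OF assms(1) x1 _ S_def L4 p4_def]
  have R: "\<rho> < 99/70" using assms(2) sqrt2_le by linarith
  let ?a = "GQ S 1" let ?b = "GQ S 2" let ?c = "GQ S 3" let ?d = "GQ S 4"
  have g0: "GQ S 0 = 0" by (rule GQ0[OF fS])
  have mono: "?a \<le> ?b" "?b \<le> ?c" "?c \<le> ?d" by (auto intro: GQ_mono)
  have d8: "?d \<le> 8" by (rule GQ_le[OF fS])
  have LB3: "LBf x 8 3 (pc S L3) (Qs S L3) =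
    (real ?c - 0) + (real ?c - real ?a) + (real ?c - real ?b) + (8/5) * (real ?c * (real ?c + 1) / 2)
      + (real (8 - ?c) * (3 + (8/5) * real ?c) + real (8 - ?c) * (real (8 - ?c) + 1) / 2 + (8/5 - 1) * (real (8 - ?c - (8 - 3)) * (real (8 - ?c - (8 - 3)) + 1) / 2))"
  proof -
    have q: "Qs S L3 0 = 0" "Qs S L3 1 = ?a" "Qs S L3 2 = ?b" "pc S L3 = ?c"
      using Qs_GQ[OF L3, of 0] Qs_GQ[OF L3, of 1] Qs_GQ[OF L3, of 2] pc_GQ[OF L3] g0 by auto
    have q2: "Qs S L3 (Suc 0) = ?a" "Qs S L3 (Suc (Suc 0)) = ?b" using q by (simp_all add: numeral_2_eq_2)
    show ?thesis unfolding LBf_def sumform q x_def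
      by (simp add: numeral_3_eq_3 lessThan_Suc q2 q)
  qed
  have LB4: "LBf x 8 4 (pc S L4) (Qs S L4) =
    (real ?d - 0) + (real ?d - real ?a) + (real ?d - real ?b) + (real ?d - real ?c) + (8/5) * (real ?d * (real ?d + 1) / 2)
      + (real (8 - ?d) * (4 + (8/5) * real ?d) + real (8 - ?d) * (real (8 - ?d) + 1) / 2 + (8/5 - 1) * (real (8 - ?d - (8 - 4)) * (real (8 - ?d - (8 - 4)) + 1) / 2))"
  proof -
    have q: "Qs S L4 0 = 0" "Qs S L4 1 = ?a" "Qs S L4 2 = ?b" "Qs S L4 3 = ?c" "pc S L4 = ?d"
      using Qs_GQ[OF L4, of 0] Qs_GQ[OF L4, of 1] Qs_GQ[OF L4, of 2] Qs_GQ[OF L4, of 3] pc_GQ[OF L4] g0 by auto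
    have q2: "Qs S L4 (Suc 0) = ?a" "Qs S L4 (Suc (Suc 0)) = ?b" "Qs S L4 (Suc (Suc (Suc 0))) = ?c"
      using q by (simp_all add: numeral_2_eq_2 numeral_3_eq_3)
    show ?thesis unfolding LBf_def sumform q x_def
      by (simp add: eval_nat_numeral lessThan_Suc q2 q)
  qed
  have fr3: "feasible 8 (run A 8 p3 (2 * 8))" by (rule oa) (rule I3(3)[OF k3])
  have fr4: "feasible 8 (run A 8 p4 (2 * 8))" by (rule oa) (rule I4(3)[OF k4])
  have pn3: "\<forall>j. 0 \<le> p3 j" and pn4: "\<forall>j. 0 \<le> p4 j" unfolding p3_def p4_def x_def by auto
  from comb[OF mono d8] show ?thesis
  proof
    assume h: "(99/70) * (228/5) \<le> (real ?c - 0) + (real ?c - real ?a) + (real ?c - real ?b) + (8/5) * (real ?c * (real ?c + 1) / 2)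
      + (real (8 - ?c) * (3 + (8/5) * real ?c) + real (8 - ?c) * (real (8 - ?c) + 1) / 2 + (8/5 - 1) * (real (8 - ?c - (8 - 3)) * (real (8 - ?c - (8 - 3)) + 1) / 2))"
    have A: "(99/70) * (228/5) \<le> ALG A 8 p3" using h LB3 I3(1)[OF k3] by simp
    have hO: "OPT 8 p3 \<le> 228/5" using I3(2)[OF k3] U3 unfolding x_def by simp
    have "\<rho> * OPT 8 p3 < ALG A 8 p3"
      by (rule final_step[OF OPT_nonneg[OF fr3 pn3] hO A R]) auto
    then show ?thesis using I3(3)[OF k3] by blast
  next
    assume h: "(99/70) * 52 \<le> (real ?d - 0) + (real ?d - real ?a) + (real ?d - real ?b) + (real ?d - real ?c) + (8/5) * (real ?d * (real ?d + 1) / 2)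
      + (real (8 - ?d) * (4 + (8/5) * real ?d) + real (8 - ?d) * (real (8 - ?d) + 1) / 2 + (8/5 - 1) * (real (8 - ?d - (8 - 4)) * (real (8 - ?d - (8 - 4)) + 1) / 2))"
    have A: "(99/70) * 52 \<le> ALG A 8 p4" using h LB4 I4(1)[OF k4] by simp
    have hO: "OPT 8 p4 \<le> 52" using I4(2)[OF k4] U4 unfolding x_def by simp
    have "\<rho> * OPT 8 p4 < ALG A 8 p4"
      by (rule final_step[OF OPT_nonneg[OF fr4 pn4] hO A R]) auto
    then show ?thesis using I4(3)[OF k4] by blast
  qed
qed


end
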